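(* In the setting of the switching procedure below (with $\lambda=\Theta(\log n)$, $k=\Theta(\lambda\log n)$) and with $D:=\frac{2en\ln n}{k}$, consider the moment when the $(1+1)$ EA phase first holds an individual at distance at most $D$ from the optimum. The expected number of further $(1+1)$ EA iterations until the procedure switches to the $(1+(\lambda,\lambda))$ GA (or finds the optimum) is $O(n\log\log n)$.
   Context: The procedure maximizes $\mathrm{OneMax}(x)=\sum_{i=1}^n x_i$ on $\{0,1\}^n$ (optimum $1^n$; distance = number of zero-bits). It starts from a uniformly random point and runs the $(1+1)$ EA (each iteration: create one offspring by flipping each bit independently with probability $1/n$, accept it if its fitness is at least the current one) until, for the first time, $k$ consecutive $(1+1)$ EA iterations fail to create a strictly better offspring; then it switches irrevocably to the $(1+(\lambda,\lambda))$ GA with population size $\lambda$. Here $\lambda=\lambda(n)=\Theta(\log n)$ and $k=k(n)=\Theta(\lambda\log n)$. *)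

theory Defs
  imports "HOL-Probability.Probability" "HOL-Library.Landau_Symbols"
begin

text \<open>Bit strings of length n are boolean lists; True = one-bit.\<close>

definition onemax :: "bool list \<Rightarrow> nat" where
  "onemax x = length (filter id x)"

definition dist_opt :: "bool list \<Rightarrow> nat" where
  "dist_opt x = length x - onemax x"

fun flips :: "nat \<Rightarrow> real \<Rightarrow> bool list pmf" where
  "flips 0 p = return_pmf []"
| "flips (Suc m) p = bind_pmf (bernoulli_pmf p) (\<lambda>b. map_pmf (\<lambda>bs. b # bs) (flips m p))"

definition mutate :: "bool list \<Rightarrow> bool list pmf" where
  "mutate x = map_pmf (\<lambda>f. map2 (\<noteq>) x f) (flips (length x) (1 / real (length x)))"

text \<open>State of the (1+1) EA phase: current individual and the number of consecutive
  iterations without strict improvement. One (1+1) EA iteration:\<close>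
definition ea_step :: "bool list \<times> nat \<Rightarrow> (bool list \<times> nat) pmf" where
  "ea_step s = (case s of (x, c) \<Rightarrow>
     map_pmf (\<lambda>y. if onemax y > onemax x then (y, 0)
                   else if onemax y = onemax x then (y, Suc c)
                   else (x, Suc c)) (mutate x))"

text \<open>The (1+1) EA phase has ended: k consecutive failures (switch to the GA) or optimum found.\<close>
definition ea_stopped :: "nat \<Rightarrow> bool list \<times> nat \<Rightarrow> bool" where
  "ea_stopped k s = (k \<le> snd s \<or> dist_opt (fst s) = 0)"

definition ea_step_stopped :: "nat \<Rightarrow> bool list \<times> nat \<Rightarrow> (bool list \<times> nat) pmf" where
  "ea_step_stopped k s = (if ea_stopped k s then return_pmf s else ea_step s)"

fun ea_iter :: "nat \<Rightarrow> nat \<Rightarrow> bool list \<times> nat \<Rightarrow> (bool list \<times> nat) pmf" where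
  "ea_iter k 0 s = return_pmf s"
| "ea_iter k (Suc t) s = bind_pmf (ea_iter k t s) (ea_step_stopped k)"

text \<open>Expected number of (1+1) EA iterations, starting in state s, until the phase ends:
  E[T] = sum over t of Pr[T > t].\<close>
definition ea_remaining :: "nat \<Rightarrow> bool list \<times> nat \<Rightarrow> ennreal" where
  "ea_remaining k s = (\<Sum>t. ennreal (measure_pmf.prob (ea_iter k t s) {s'. \<not> ea_stopped k s'}))"

end

theory Submission
  imports Defs "HOL-Real_Asymp.Real_Asymp"
begin

lemma flips_set: "set_pmf (flips m p) \<subseteq> {f. length f = m}"
  by (induction m) auto

lemma pmf_map_Cons: "pmf (map_pmf (Cons b) M) (c # fs) = (if b = c then pmf M fs else 0)"
proof (cases "b = c")
  case True
  then show ?thesis by (simp add: pmf_map_inj' inj_def)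
next
  case False
  then have "c # fs \<notin> set_pmf (map_pmf (Cons b) M)" by auto
  then show ?thesis using False by (simp add: set_pmf_eq)
qed

lemma pmf_flips:
  assumes "0 \<le> p" "p \<le> 1"
  shows "pmf (flips m p) f = (if length f = m then (\<Prod>i<m. if f!i then p else 1-p) else 0)"
proof (induction m arbitrary: f)
  case 0
  then show ?case by (cases f) (auto simp: pmf_return)
next
  case (Suc m)
  show ?case
  proof (cases f)
    case Nil
    then have "f \<notin> set_pmf (flips (Suc m) p)" using flips_set[of "Suc m" p] by auto
    then show ?thesis using Nil by (simp add: set_pmf_eq)
  next
    case (Cons c fs)
    have "pmf (flips (Suc m) p) f = (if c then p else 1 - p) * pmf (flips m p) fs"
      using assms by (simp add: Cons pmf_bind pmf_map_Cons)
    moreover have "(\<Prod>i<Suc m. if (c#fs)!i then p else 1-p) = (if c then p else 1 - p) * (\<Prod>i<m. if fs!i then p else 1-p)"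
      by (subst prod.lessThan_Suc_shift) simp
    ultimately show ?thesis using Suc[of fs] by (simp add: Cons)
  qed
qed

definition ev :: "nat \<Rightarrow> nat \<Rightarrow> bool list" where
  "ev n j = (replicate n False)[j := True]"

lemma pmf_flips_ev:
  assumes "0 \<le> p" "p \<le> 1" "j < n"
  shows "pmf (flips n p) (ev n j) = p * (1 - p) ^ (n - 1)"
proof -
  have "(\<Prod>i<n. if ev n j ! i then p else 1-p) = (\<Prod>i<n. if i = j then p else 1-p)"
    using assms by (intro prod.cong) (auto simp: ev_def)
  also have "\<dots> = p * (\<Prod>i\<in>{..<n}-{j}. if i = j then p else 1-p)"
    using assms by (subst prod.remove[of _ j]) auto
  also have "(\<Prod>i\<in>{..<n}-{j}. if i = j then p else 1-p) = (\<Prod>i\<in>{..<n}-{j}. 1-p)"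
    by (intro prod.cong) auto
  also have "\<dots> = (1 - p) ^ (n - 1)" using assms by simp
  finally show ?thesis using assms by (simp add: pmf_flips ev_def)
qed

lemma onemax_card: "onemax x = card {i. i < length x \<and> x ! i}"
  unfolding onemax_def by (simp add: length_filter_conv_card)

lemma dist_opt_card: "dist_opt x = card {i. i < length x \<and> \<not> x ! i}"
proof -
  have "length (filter id x) + length (filter (\<lambda>b. \<not> id b) x) = length x"
    by (rule sum_length_filter_compl)
  then show ?thesis unfolding dist_opt_def onemax_def by (simp add: length_filter_conv_card)
qed

lemma onemax_le: "onemax x \<le> length x"
  by (simp add: onemax_def)

lemma dist_opt_le: "dist_opt x \<le> length x"
  by (simp add: dist_opt_def)

lemma improve_ev:
  assumes "j < length x" "\<not> x ! j"
  shows "onemax (map2 (\<noteq>) x (ev (length x) j)) = Suc (onemax x)"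
proof -
  have eq: "map2 (\<noteq>) x (ev (length x) j) = x[j := True]"
    using assms by (intro nth_equalityI) (auto simp: ev_def nth_list_update)
  have se: "{i. i < length (x[j := True]) \<and> x[j := True] ! i} = insert j {i. i < length x \<and> x ! i}"
    using assms by (auto simp: nth_list_update)
  have "onemax (x[j := True]) = card (insert j {i. i < length x \<and> x ! i})"
    unfolding onemax_card se by simp
  then show ?thesis using assms unfolding eq by (simp add: onemax_card)
qed

lemma improve_prob:
  assumes n: "length x = n" "n \<ge> 1"
  shows "measure_pmf.prob (flips n (1 / real n)) {f. onemax x < onemax (map2 (\<noteq>) x f)}
      \<ge> real (dist_opt x) * ((1 / real n) * (1 - 1 / real n) ^ (n - 1))"
proof -
  define Z where "Z = {i. i < length x \<and> \<not> x ! i}"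
  have fin: "finite Z" by (simp add: Z_def)
  have p: "0 \<le> 1 / real n" "1 / real n \<le> 1" using n by auto
  have inj: "inj_on (ev n) Z"
  proof
    fix i j assume "i \<in> Z" "j \<in> Z" "ev n i = ev n j"
    then have "ev n i ! i = ev n j ! i" by simp
    then show "i = j" using \<open>i \<in> Z\<close> \<open>j \<in> Z\<close> n by (auto simp: Z_def ev_def nth_list_update split: if_splits)
  qed
  have sub: "ev n ` Z \<subseteq> {f. onemax x < onemax (map2 (\<noteq>) x f)}"
    using improve_ev n by (auto simp: Z_def)
  have "measure_pmf.prob (flips n (1 / real n)) (ev n ` Z) = (\<Sum>f\<in>ev n ` Z. pmf (flips n (1 / real n)) f)"
    using fin by (simp add: measure_measure_pmf_finite)
  also have "\<dots> = (\<Sum>j\<in>Z. pmf (flips n (1 / real n)) (ev n j))"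
    using inj by (simp add: sum.reindex)
  also have "\<dots> = (\<Sum>j\<in>Z. (1 / real n) * (1 - 1 / real n) ^ (n - 1))"
    using p n by (intro sum.cong) (auto simp: Z_def pmf_flips_ev)
  also have "\<dots> = real (dist_opt x) * ((1 / real n) * (1 - 1 / real n) ^ (n - 1))"
    by (simp add: dist_opt_card Z_def)
  finally have calc: "measure_pmf.prob (flips n (1 / real n)) (ev n ` Z) = real (dist_opt x) * ((1 / real n) * (1 - 1 / real n) ^ (n - 1))" .
  have mono: "measure_pmf.prob (flips n (1 / real n)) (ev n ` Z) \<le> measure_pmf.prob (flips n (1 / real n)) {f. onemax x < onemax (map2 (\<noteq>) x f)}"
    by (rule measure_pmf.finite_measure_mono[OF sub]) simp
  show ?thesis using calc mono by linarith
qed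

definition aa :: "nat \<Rightarrow> real" where
  "aa n = (1 / real n) * (1 - 1 / real n) ^ (n - 1)"
definition rr :: "nat \<Rightarrow> nat \<Rightarrow> nat \<Rightarrow> nat \<Rightarrow> real" where
  "rr k n d c = (\<Sum>j<k - c. (1 - real d * aa n) ^ j)"
definition WW :: "nat \<Rightarrow> nat \<Rightarrow> nat \<Rightarrow> real" where
  "WW k n m = (\<Sum>i\<in>{1..m}. rr k n i 0)"
definition VV :: "nat \<Rightarrow> bool list \<times> nat \<Rightarrow> real" where
  "VV k s = (if dist_opt (fst s) = 0 then 0
     else WW k (length (fst s)) (dist_opt (fst s) - 1) + rr k (length (fst s)) (dist_opt (fst s)) (snd s))"

lemma aa_nonneg: "0 \<le> aa n"
proof (cases "n = 0")
  case False
  then have "1 / real n \<le> 1" by simp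
  then show ?thesis unfolding aa_def by simp
qed (simp add: aa_def)

lemma daa_le: assumes "d \<le> n" shows "real d * aa n \<le> 1"
proof (cases "n = 0")
  case False
  have h: "0 \<le> 1 - 1 / real n" "1 - 1 / real n \<le> 1" using False by auto
  have "(1 - 1 / real n) ^ (n - 1) \<le> 1" using h by (simp add: power_le_one)
  then have "aa n \<le> 1 / real n" unfolding aa_def using False
    by (simp add: divide_right_mono)
  then have "real d * aa n \<le> real n * (1 / real n)"
    using assms aa_nonneg by (intro mult_mono) auto
  then show ?thesis using False by simp
qed (use assms in simp)

lemma rr_nonneg: assumes "d \<le> n" shows "0 \<le> rr k n d c"
  unfolding rr_def using daa_le[OF assms] by (intro sum_nonneg zero_le_power) simp

lemma rr_rec: assumes "c < k" shows "rr k n d c = 1 + (1 - real d * aa n) * rr k n d (Suc c)"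
proof -
  have "k - c = Suc (k - Suc c)" using assms by simp
  then show ?thesis unfolding rr_def
    by (simp only: sum.lessThan_Suc_shift) (simp add: sum_distrib_left)
qed

lemma WW_nonneg: assumes "m \<le> n" shows "0 \<le> WW k n m"
  unfolding WW_def using assms by (intro sum_nonneg rr_nonneg) auto

lemma WW_mono: assumes "m \<le> m'" "m' \<le> n" shows "WW k n m \<le> WW k n m'"
  unfolding WW_def using assms by (intro sum_mono2 rr_nonneg) auto

lemma VV_zero: assumes "dist_opt y \<le> m" "length y = n" "m \<le> n"
  shows "VV k (y, 0) \<le> WW k n m"
proof (cases "dist_opt y = 0")
  case True
  then show ?thesis using WW_nonneg[OF assms(3)] by (simp add: VV_def)
next
  case False
  then obtain m' where m': "dist_opt y = Suc m'" by (cases "dist_opt y") auto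
  have "VV k (y, 0) = WW k n (Suc m')"
    using m' assms by (simp add: VV_def WW_def)
  also have "\<dots> \<le> WW k n m" using assms m' by (intro WW_mono) auto
  finally show ?thesis .
qed

lemma drift:
  assumes ns: "\<not> ea_stopped k s"
  shows "1 + (\<integral>\<^sup>+ y. ennreal (VV k y) \<partial>ea_step s) \<le> ennreal (VV k s)"
proof -
  obtain x c where s: "s = (x, c)" by (cases s)
  define n where "n = length x"
  define d where "d = dist_opt x"
  have ck: "c < k" and d1: "d \<ge> 1" using ns by (auto simp: ea_stopped_def s d_def)
  have dn: "d \<le> n" using dist_opt_le by (simp add: d_def n_def)
  with d1 have n1: "n \<ge> 1" by simp
  define h where "h = (\<lambda>f. map2 (\<noteq>) x f)"
  define G where "G = (\<lambda>y. if onemax y > onemax x then (y, 0)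
                   else if onemax y = onemax x then (y, Suc c) else (x, Suc c))"
  define A where "A = {f. onemax x < onemax (h f)}"
  define P where "P = measure_pmf.prob (flips n (1 / real n)) A"
  define W where "W = WW k n (d - 1)"
  define r where "r = rr k n d (Suc c)"
  have r0: "0 \<le> r" unfolding r_def using dn by (rule rr_nonneg)
  have W0: "0 \<le> W" unfolding W_def using dn by (intro WW_nonneg) simp
  have PP: "P \<ge> real d * aa n" unfolding P_def A_def h_def aa_def d_def
    using improve_prob[of x n] n1 by (simp add: n_def)
  have step_eq: "ea_step s = map_pmf (G \<circ> h) (flips n (1 / real n))"
    by (simp add: ea_step_def s mutate_def map_pmf_comp G_def h_def n_def o_def)
  have od: "onemax x \<le> n" using onemax_le by (simp add: n_def)
  have pw: "ennreal (VV k (G (h f))) \<le> ennreal W + ennreal r * indicator (- A) f"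
    if f: "f \<in> set_pmf (flips n (1 / real n))" for f
  proof -
    have lf: "length f = n" using f flips_set by blast
    have lh: "length (h f) = n" by (simp add: h_def lf n_def)
    have omh: "onemax (h f) \<le> n" using lh onemax_le by metis
    show ?thesis
    proof (cases "f \<in> A")
      case True
      then have "G (h f) = (h f, 0)" by (simp add: G_def A_def)
      moreover have "dist_opt (h f) \<le> d - 1" using True od omh lh
        by (simp add: A_def dist_opt_def d_def n_def)
      ultimately have "VV k (G (h f)) \<le> W" unfolding W_def using VV_zero[of "h f" "d - 1" n k] lh dn by simp
      then show ?thesis using True by (simp add: ennreal_leI)
    next
      case False
      have "VV k (G (h f)) = W + r"
      proof (cases "onemax (h f) = onemax x")
        case True
        then have "G (h f) = (h f, Suc c)" by (simp add: G_def)
        moreover have "dist_opt (h f) = d" using True lh by (simp add: dist_opt_def d_def n_def)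
        ultimately show ?thesis using d1 lh by (simp add: VV_def W_def r_def)
      next
        case F2: False
        then have "G (h f) = (x, Suc c)" using False by (simp add: G_def A_def)
        then show ?thesis using d1 by (simp add: VV_def W_def r_def d_def n_def)
      qed
      then show ?thesis using False r0 W0 by (simp add: ennreal_plus)
    qed
  qed
  have "(\<integral>\<^sup>+ y. ennreal (VV k y) \<partial>ea_step s) = (\<integral>\<^sup>+ f. ennreal (VV k (G (h f))) \<partial>flips n (1 / real n))"
    by (simp add: step_eq nn_integral_map_pmf)
  also have "\<dots> \<le> (\<integral>\<^sup>+ f. ennreal W + ennreal r * indicator (- A) f \<partial>flips n (1 / real n))"
    by (intro nn_integral_mono_AE) (simp add: AE_measure_pmf_iff pw)
  also have "\<dots> = ennreal W + ennreal r * emeasure (measure_pmf (flips n (1 / real n))) (- A)"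
    by (simp add: nn_integral_add nn_integral_cmult measure_pmf.emeasure_space_1)
  also have "\<dots> = ennreal (W + r * (1 - P))"
  proof -
    have c: "measure_pmf.prob (flips n (1 / real n)) (- A) = 1 - P"
      using measure_pmf.prob_compl[of A "flips n (1 / real n)"] by (simp add: Compl_eq_Diff_UNIV P_def)
    have p0: "1 - P \<ge> 0" unfolding P_def by simp
    have "ennreal W + ennreal r * emeasure (measure_pmf (flips n (1 / real n))) (- A)
        = ennreal W + ennreal r * ennreal (1 - P)"
      by (simp only: measure_pmf.emeasure_eq_measure c)
    also have "\<dots> = ennreal W + ennreal (r * (1 - P))"
      using r0 p0 by (simp only: ennreal_mult)
    also have "\<dots> = ennreal (W + r * (1 - P))"
      using r0 p0 W0 by (simp only: ennreal_plus mult_nonneg_nonneg)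
    finally show ?thesis .
  qed
  finally have I: "(\<integral>\<^sup>+ y. ennreal (VV k y) \<partial>ea_step s) \<le> ennreal (W + r * (1 - P))" .
  have "VV k s = W + rr k n d c" using d1 by (simp add: VV_def s W_def d_def n_def)
  also have "rr k n d c = 1 + (1 - real d * aa n) * r" using ck by (simp add: rr_rec r_def)
  finally have V: "VV k s = W + 1 + (1 - real d * aa n) * r" by simp
  have "r * (1 - P) \<le> (1 - real d * aa n) * r" using PP r0
    by (simp add: mult.commute mult_left_mono)
  then have le: "1 + (W + r * (1 - P)) \<le> VV k s" using V by simp
  have P1: "P \<le> 1" unfolding P_def by simp
  have "1 + (\<integral>\<^sup>+ y. ennreal (VV k y) \<partial>ea_step s) \<le> 1 + ennreal (W + r * (1 - P))"
    using I by (rule add_left_mono)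
  also have "\<dots> = ennreal (1 + (W + r * (1 - P)))"
    using r0 W0 P1 by (simp add: ennreal_plus)
  also have "\<dots> \<le> ennreal (VV k s)" using le by (rule ennreal_leI)
  finally show ?thesis .
qed
lemma rem_bound:
  fixes F :: "bool list \<times> nat \<Rightarrow> ennreal"
  assumes drift: "\<And>z. \<not> ea_stopped k z \<Longrightarrow> 1 + (\<integral>\<^sup>+ y. F y \<partial>ea_step z) \<le> F z"
  shows "ea_remaining k s \<le> F s"
proof -
  let ?P = "\<lambda>t. ennreal (measure_pmf.prob (ea_iter k t s) {s'. \<not> ea_stopped k s'})"
  have step: "indicator {s'. \<not> ea_stopped k s'} z + (\<integral>\<^sup>+ y. F y \<partial>ea_step_stopped k z) \<le> F z" for z
  proof (cases "ea_stopped k z")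
    case True
    then show ?thesis by (simp add: ea_step_stopped_def nn_integral_return_pmf)
  next
    case False
    then show ?thesis using drift[of z] by (simp add: ea_step_stopped_def)
  qed
  have key: "(\<Sum>t<T. ?P t) + (\<integral>\<^sup>+ y. F y \<partial>ea_iter k T s) \<le> F s" for T
  proof (induction T)
    case 0
    then show ?case by (simp add: nn_integral_return_pmf)
  next
    case (Suc T)
    have "?P T + (\<integral>\<^sup>+ y. F y \<partial>ea_iter k (Suc T) s)
        = (\<integral>\<^sup>+ z. indicator {s'. \<not> ea_stopped k s'} z \<partial>ea_iter k T s)
          + (\<integral>\<^sup>+ z. (\<integral>\<^sup>+ y. F y \<partial>ea_step_stopped k z) \<partial>ea_iter k T s)"
      by (simp add: nn_integral_bind_pmf measure_pmf.emeasure_eq_measure[symmetric])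
    also have "\<dots> = (\<integral>\<^sup>+ z. indicator {s'. \<not> ea_stopped k s'} z + (\<integral>\<^sup>+ y. F y \<partial>ea_step_stopped k z) \<partial>ea_iter k T s)"
      by (rule nn_integral_add[symmetric]) auto
    also have "\<dots> \<le> (\<integral>\<^sup>+ z. F z \<partial>ea_iter k T s)"
      by (rule nn_integral_mono) (rule step)
    finally have "?P T + (\<integral>\<^sup>+ y. F y \<partial>ea_iter k (Suc T) s) \<le> (\<integral>\<^sup>+ z. F z \<partial>ea_iter k T s)" .
    then have "(\<Sum>t<Suc T. ?P t) + (\<integral>\<^sup>+ y. F y \<partial>ea_iter k (Suc T) s)
        \<le> (\<Sum>t<T. ?P t) + (\<integral>\<^sup>+ z. F z \<partial>ea_iter k T s)"
      by (simp add: add.assoc add_left_mono)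
    then show ?case using Suc by order
  qed
  have "(\<Sum>t<T. ?P t) \<le> F s" for T
    using key[of T] by (rule order_trans[rotated]) simp
  then show ?thesis unfolding ea_remaining_def
    by (intro suminf_le_const) (auto intro: summableI)
qed
lemma harm_tele:
  assumes "1 \<le> M" "M \<le> d"
  shows "(\<Sum>i\<in>{M<..d}. 1 / real i) \<le> ln (real d) - ln (real M)"
  using assms(2)
proof (induction d rule: dec_induct)
  case base
  then show ?case by simp
next
  case (step d)
  have d1: "d \<ge> 1" using assms step by simp
  have "{M<..Suc d} = insert (Suc d) {M<..d}" using step by auto
  then have "(\<Sum>i\<in>{M<..Suc d}. 1 / real i) = 1 / real (Suc d) + (\<Sum>i\<in>{M<..d}. 1 / real i)"
    by simp
  also have "\<dots> \<le> 1 / real (Suc d) + (ln (real d) - ln (real M))"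
    using step by simp
  also have "1 / real (Suc d) \<le> ln (real (Suc d)) - ln (real d)"
  proof -
    have "ln (real d / real (Suc d)) \<le> real d / real (Suc d) - 1"
      using d1 by (intro ln_le_minus_one) auto
    also have "\<dots> = - (1 / real (Suc d))" by (simp add: field_simps)
    finally show ?thesis using d1 by (simp add: ln_div)
  qed
  finally show ?case by simp
qed

lemma aa_lower:
  assumes "n \<ge> 1"
  shows "(1 - 1 / real n) ^ (n - 1) \<ge> exp (-1)"
proof (cases "n = 1")
  case True
  then show ?thesis by simp
next
  case False
  define m where "m = n - 1"
  have m1: "m \<ge> 1" and nm: "real n = real m + 1" using assms False by (auto simp: m_def)
  have "(1 + 1 / real m) ^ m \<le> exp (1 / real m) ^ m"
    using exp_ge_add_one_self[of "1 / real m"] by (intro power_mono) (auto simp: add.commute)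
  also have "\<dots> = exp 1" using m1 by (simp add: exp_of_nat_mult[symmetric])
  finally have A: "(1 + 1 / real m) ^ m \<le> exp 1" .
  have "1 - 1 / real n = inverse (1 + 1 / real m)" using m1 nm by (simp add: field_simps)
  then have "(1 - 1 / real n) ^ (n - 1) = inverse ((1 + 1 / real m) ^ m)"
    by (simp add: m_def power_inverse)
  also have "\<dots> \<ge> inverse (exp 1)"
  proof (rule le_imp_inverse_le[OF A])
    have "0 < 1 + 1 / real m" using m1 by (simp add: add_pos_nonneg)
    then show "0 < (1 + 1 / real m) ^ m" by simp
  qed
  finally show ?thesis by (simp add: exp_minus)
qed


lemma sum_min_bound:
  fixes k n d :: nat
  assumes k1: "k \<ge> 1" and n2: "n \<ge> 2" and dD: "real d \<le> 2 * exp 1 * real n * ln (real n) / real k"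
  shows "(\<Sum>i\<in>{1..d}. min (real k) (exp 1 * real n / real i))
     \<le> exp 1 * real n + real k + exp 1 * real n * ln (2 * ln (real n))"
proof -
  define M where "M = nat \<lceil>exp 1 * real n / real k\<rceil>"
  have pos: "0 < exp 1 * real n / real k" using k1 n2 by simp
  have M1: "real M \<ge> exp 1 * real n / real k" unfolding M_def by linarith
  have M2: "real M < exp 1 * real n / real k + 1" unfolding M_def using pos by linarith
  have Mpos: "M \<ge> 1" using M1 pos by (cases M) auto
  have Mk: "real M * real k \<le> exp 1 * real n + real k"
  proof -
    have "real M * real k \<le> (exp 1 * real n / real k + 1) * real k"
      using M2 k1 by (intro mult_right_mono) auto
    moreover have "(exp 1 * real n / real k + 1) * real k = exp 1 * real n + real k"
      using k1 by (simp add: distrib_right)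
    ultimately show ?thesis by linarith
  qed
  have ln2: "1 \<le> 2 * ln (real n)"
  proof -
    have nn: "real n * real n \<ge> 2 * 2" using n2 by (intro mult_mono) auto
    have "ln (exp 1) \<le> ln (real n * real n)"
      using exp_le nn by (subst ln_le_cancel_iff) auto
    then show ?thesis using n2 by (simp add: ln_mult)
  qed
  have L0: "0 \<le> exp 1 * real n * ln (2 * ln (real n))" using ln2 by simp
  have sum_le_dk: "(\<Sum>i\<in>{1..m}. min (real k) (exp 1 * real n / real i)) \<le> real m * real k" for m
    using sum_mono[of "{1..m}" "\<lambda>i. min (real k) (exp 1 * real n / real i)" "\<lambda>i. real k"] by simp
  show ?thesis
  proof (cases "d \<le> M")
    case True
    have "(\<Sum>i\<in>{1..d}. min (real k) (exp 1 * real n / real i)) \<le> real d * real k" by (rule sum_le_dk)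
    also have "\<dots> \<le> real M * real k" using True by (intro mult_right_mono) auto
    finally show ?thesis using Mk L0 by linarith
  next
    case False
    have split: "{1..d} = {1..M} \<union> {M<..d}" using False by auto
    have "(\<Sum>i\<in>{1..d}. min (real k) (exp 1 * real n / real i))
        = (\<Sum>i\<in>{1..M}. min (real k) (exp 1 * real n / real i)) + (\<Sum>i\<in>{M<..d}. min (real k) (exp 1 * real n / real i))"
      unfolding split by (rule sum.union_disjoint) auto
    also have "(\<Sum>i\<in>{M<..d}. min (real k) (exp 1 * real n / real i)) \<le> (\<Sum>i\<in>{M<..d}. exp 1 * real n * (1 / real i))"
      by (intro sum_mono) auto
    also have "\<dots> = exp 1 * real n * (\<Sum>i\<in>{M<..d}. 1 / real i)" by (simp add: sum_distrib_left)
    also have "\<dots> \<le> exp 1 * real n * (ln (real d) - ln (real M))"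
      using harm_tele[of M d] Mpos False by (intro mult_left_mono) auto
    also have "ln (real d) - ln (real M) \<le> ln (2 * ln (real n))"
    proof -
      have Mp: "real M > 0" using Mpos by simp
      have "real d / real M \<le> real d / (exp 1 * real n / real k)"
      proof (rule divide_left_mono[OF M1])
        show "0 \<le> real d" by simp
        show "0 < real M * (exp 1 * real n / real k)" using Mp pos by (rule mult_pos_pos)
      qed
      also have "\<dots> = real d * real k / (exp 1 * real n)" using k1 n2 by (simp add: field_simps)
      also have "\<dots> \<le> (2 * exp 1 * real n * ln (real n) / real k) * real k / (exp 1 * real n)"
        using dD k1 n2 by (intro divide_right_mono mult_right_mono) auto
      also have "\<dots> = 2 * ln (real n)" using k1 n2 by (simp add: field_simps)
      finally have "real d / real M \<le> 2 * ln (real n)" .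
      moreover have "real d / real M > 0" using Mp False by simp
      ultimately have "ln (real d / real M) \<le> ln (2 * ln (real n))" by simp
      then show ?thesis using Mp False by (simp add: ln_div)
    qed
    finally show ?thesis
      using sum_le_dk[of M] Mk by (simp add: mult_left_mono) 
  qed
qed

lemma aa_ge: assumes "n \<ge> 1" shows "aa n \<ge> 1 / (exp 1 * real n)"
proof -
  have "exp (-1) / real n \<le> (1 - 1 / real n) ^ (n - 1) / real n"
    using aa_lower[OF assms] assms by (intro divide_right_mono) auto
  then show ?thesis by (simp add: aa_def exp_minus field_simps)
qed

lemma rr_le_k: assumes "d \<le> n" shows "rr k n d 0 \<le> real k"
proof -
  have q: "0 \<le> 1 - real d * aa n" "1 - real d * aa n \<le> 1"
    using daa_le[OF assms] aa_nonneg by auto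
  have "rr k n d 0 = (\<Sum>j<k. (1 - real d * aa n) ^ j)" by (simp add: rr_def)
  also have "\<dots> \<le> (\<Sum>j<k. (1::real))" using q by (intro sum_mono power_le_one) auto
  finally show ?thesis by simp
qed

lemma rr_le_inv: assumes "1 \<le> d" "d \<le> n" shows "rr k n d 0 \<le> exp 1 * real n / real d"
proof -
  define q where "q = 1 - real d * aa n"
  have a0: "aa n \<ge> 1 / (exp 1 * real n)" using aa_ge assms by simp
  have "1 / (exp 1 * real n) > 0" using assms by simp
  then have apos: "aa n > 0" using a0 by linarith
  have p: "real d * aa n > 0" using apos assms by simp
  have q0: "0 \<le> q" "q < 1" using daa_le[OF assms(2)] p by (auto simp: q_def)
  have "rr k n d 0 = (1 - q ^ k) / (1 - q)" unfolding rr_def q_def[symmetric]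
    using q0 by (simp add: sum_gp_strict)
  also have "\<dots> \<le> 1 / (1 - q)" using q0 by (intro divide_right_mono) auto
  also have "1 - q = real d * aa n" by (simp add: q_def)
  also have "1 / (real d * aa n) \<le> 1 / (real d * (1 / (exp 1 * real n)))"
    using a0 assms apos by (intro divide_left_mono mult_left_mono mult_pos_pos) auto
  also have "\<dots> = exp 1 * real n / real d" by simp
  finally show ?thesis .
qed

lemma VV_bound:
  assumes "length x = n"
  shows "VV k (x, 0) \<le> (\<Sum>i\<in>{1..dist_opt x}. min (real k) (exp 1 * real n / real i))"
proof (cases "dist_opt x = 0")
  case True
  then show ?thesis by (simp add: VV_def)
next
  case False
  then obtain m where m: "dist_opt x = Suc m" by (cases "dist_opt x") auto
  have dn: "dist_opt x \<le> n" using dist_opt_le assms by metis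
  have "VV k (x, 0) = WW k n (Suc m)" using m assms by (simp add: VV_def WW_def)
  also have "\<dots> = (\<Sum>i\<in>{1..dist_opt x}. rr k n i 0)" by (simp add: WW_def m)
  also have "\<dots> \<le> (\<Sum>i\<in>{1..dist_opt x}. min (real k) (exp 1 * real n / real i))"
    using dn by (intro sum_mono) (auto intro!: rr_le_k rr_le_inv)
  finally show ?thesis .
qed

theorem lemma5p3:
  fixes lam k :: "nat \<Rightarrow> nat"
  assumes "(\<lambda>n. real (lam n)) \<in> \<Theta>(\<lambda>n. ln (real n))"
    and "(\<lambda>n. real (k n)) \<in> \<Theta>(\<lambda>n. real (lam n) * ln (real n))"
  shows "\<exists>C>0. eventually (\<lambda>n. \<forall>x::bool list. length x = n \<longrightarrow>
            real (dist_opt x) \<le> 2 * exp 1 * real n * ln (real n) / real (k n) \<longrightarrow>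
            ea_remaining (k n) (x, 0) \<le> ennreal (C * real n * ln (ln (real n)))) at_top"
proof -
  have k1: "(\<lambda>n. real (k n)) \<in> O(\<lambda>n. real (lam n) * ln (real n))"
    using assms(2) by (rule bigthetaD1)
  have l1: "(\<lambda>n. real (lam n)) \<in> O(\<lambda>n. ln (real n))"
    using assms(1) by (rule bigthetaD1)
  have "(\<lambda>n. real (lam n) * ln (real n)) \<in> O(\<lambda>n. ln (real n) * ln (real n))"
    using l1 by (rule landau_o.big.mult_right)
  with k1 have k2: "(\<lambda>n. real (k n)) \<in> O(\<lambda>n. ln (real n) * ln (real n))"
    by (rule landau_o.big_trans)
  have "(\<lambda>n::nat. ln (real n) * ln (real n)) \<in> o(\<lambda>n. real n)" by real_asymp
  with k2 have "(\<lambda>n. real (k n)) \<in> o(\<lambda>n. real n)" by (rule landau_o.big_small_trans)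
  then have ev1: "eventually (\<lambda>n. norm (real (k n)) \<le> 1 * norm (real n)) at_top"
    by (rule landau_o.smallD) simp
  have ev2: "eventually (\<lambda>n::nat. 1 \<le> ln (ln (real n))) at_top" by real_asymp
  have ev3: "eventually (\<lambda>n::nat. 2 \<le> n) at_top" by (rule eventually_ge_at_top)
  define C :: real where "C = 3 * exp 1 + 1"
  have "eventually (\<lambda>n. \<forall>x::bool list. length x = n \<longrightarrow>
            real (dist_opt x) \<le> 2 * exp 1 * real n * ln (real n) / real (k n) \<longrightarrow>
            ea_remaining (k n) (x, 0) \<le> ennreal (C * real n * ln (ln (real n)))) at_top"
    using ev1 ev2 ev3
  proof eventually_elim
    case (elim n)
    have kn: "real (k n) \<le> real n" using elim(1) by simp
    have ll: "1 \<le> ln (ln (real n))" using elim(2) .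
    have n2: "2 \<le> n" using elim(3) .
    show ?case
    proof (intro allI impI)
      fix x :: "bool list"
      assume len: "length x = n"
        and dD: "real (dist_opt x) \<le> 2 * exp 1 * real n * ln (real n) / real (k n)"
      have S: "(\<Sum>i\<in>{1..dist_opt x}. min (real (k n)) (exp 1 * real n / real i))
              \<le> C * real n * ln (ln (real n))"
      proof (cases "k n = 0")
        case True
        have "(\<Sum>i\<in>{1..dist_opt x}. min (real (k n)) (exp 1 * real n / real i)) = 0"
          using True by (intro sum.neutral) auto
        moreover have "0 \<le> C * real n * ln (ln (real n))" using ll by (simp add: C_def)
        ultimately show ?thesis by simp
      next
        case False
        have lnpos: "0 < ln (real n)" using n2 by simp
        have "(\<Sum>i\<in>{1..dist_opt x}. min (real (k n)) (exp 1 * real n / real i))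
            \<le> exp 1 * real n + real (k n) + exp 1 * real n * ln (2 * ln (real n))"
          using False n2 dD by (intro sum_min_bound) auto
        also have "ln (2 * ln (real n)) = ln 2 + ln (ln (real n))"
          using lnpos by (simp add: ln_mult)
        also have "ln 2 \<le> ln (ln (real n))"
          using ln_2_less_1 ll by linarith
        then have "exp 1 * real n * (ln 2 + ln (ln (real n))) \<le> exp 1 * real n * (2 * ln (ln (real n)))"
          by (intro mult_left_mono) auto
        then have "exp 1 * real n + real (k n) + exp 1 * real n * (ln 2 + ln (ln (real n)))
            \<le> exp 1 * real n * ln (ln (real n)) + real n * ln (ln (real n)) + exp 1 * real n * (2 * ln (ln (real n)))"
        proof -
          have "exp 1 * real n \<le> exp 1 * real n * ln (ln (real n))"
            using mult_left_mono[OF ll, of "exp 1 * real n"] by simp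
          moreover have "real (k n) \<le> real n * ln (ln (real n))"
            using mult_mono[OF kn ll] by simp
          ultimately show "exp 1 * real n * (ln 2 + ln (ln (real n))) \<le> exp 1 * real n * (2 * ln (ln (real n))) \<Longrightarrow> ?thesis"
            by linarith
        qed
        also have "\<dots> = C * real n * ln (ln (real n))" by (simp add: C_def algebra_simps)
        finally show ?thesis by simp
      qed
      have "ea_remaining (k n) (x, 0) \<le> ennreal (VV (k n) (x, 0))"
        by (rule rem_bound) (rule drift)
      also have "\<dots> \<le> ennreal (C * real n * ln (ln (real n)))"
        using VV_bound[OF len, of "k n"] S by (intro ennreal_leI) linarith
      finally show "ea_remaining (k n) (x, 0) \<le> ennreal (C * real n * ln (ln (real n)))" .
    qed
  qed
  moreover have "C > 0" by (simp add: C_def add_pos_pos)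
  ultimately show ?thesis by blast
qed

end
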